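(* Let $a\neq 0$ be a real constant and suppose $u=f(x,t)$ is a solution of the Hirota–Ramani equation $$u_t-u_{xxt}+a\,u_x(1-u_t)=0.$$ Then for every real $s$ the following functions are also solutions of this equation: $$f(x-s,t),\qquad f(x,t-s),\qquad f(x,t)+\frac{s}{a},$$ $$e^{s}f\big(xe^{s},\,te^{-3s}\big)+\frac{x}{a}\big(1-e^{2s}\big)+t\big(1-e^{-2s}\big).$$ *)

theory Defs
  imports Complex_Main
begin

definition hr_solution :: "real \<Rightarrow> (real \<Rightarrow> real \<Rightarrow> real) \<Rightarrow> bool" where
  "hr_solution a f \<longleftrightarrow>
     (\<exists>ft fx fxt fxxt :: real \<Rightarrow> real \<Rightarrow> real.
        (\<forall>x t. ((\<lambda>t'. f x t') has_real_derivative ft x t) (at t)) \<and>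
        (\<forall>x t. ((\<lambda>x'. f x' t) has_real_derivative fx x t) (at x)) \<and>
        (\<forall>x t. ((\<lambda>x'. ft x' t) has_real_derivative fxt x t) (at x)) \<and>
        (\<forall>x t. ((\<lambda>x'. fxt x' t) has_real_derivative fxxt x t) (at x)) \<and>
        (\<forall>x t. ft x t - fxxt x t + a * fx x t * (1 - ft x t) = 0))"

end

theory Submission
  imports Defs
begin

lemma scal: "((\<lambda>y. g (y * c)) has_real_derivative (D * c)) (at y0)"
  if "(g has_real_derivative D) (at (y0 * c))" for g :: "real \<Rightarrow> real"
proof -
  have "((\<lambda>y. y * c) has_real_derivative c) (at y0)"
    by (auto intro!: derivative_eq_intros)
  from DERIV_chain2[OF that this] show ?thesis by simp
qed

lemma shiftd: "((\<lambda>y. g (y - c)) has_real_derivative D) (at y0)"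
  if "(g has_real_derivative D) (at (y0 - c))" for g :: "real \<Rightarrow> real"
proof -
  have "((\<lambda>y. y - c) has_real_derivative 1) (at y0)"
    by (auto intro!: derivative_eq_intros)
  from DERIV_chain2[OF that this] show ?thesis by simp
qed

lemma alg: fixes E p q r a :: real assumes "E > 0" "a \<noteq> 0" "p - q + a * r * (1 - p) = 0"
  shows "E * (p * inverse (E^3)) + (1 - inverse (E^2)) - E * (q * E) * E * inverse (E^3)
     + a * (E * (r * E) + 1 / a * (1 - E^2)) * (1 - (E * (p * inverse (E^3)) + (1 - inverse (E^2)))) = 0"
proof -
  have "E * (p * inverse (E^3)) + (1 - inverse (E^2)) - E * (q * E) * E * inverse (E^3)
     + a * (E * (r * E) + 1 / a * (1 - E^2)) * (1 - (E * (p * inverse (E^3)) + (1 - inverse (E^2))))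
    = p - q + a * r * (1 - p)"
    using assms(1,2) by (simp add: field_simps power3_eq_cube power2_eq_square)
  thus ?thesis using assms(3) by simp
qed

theorem theorem3p1:
  fixes a s :: real and f :: "real \<Rightarrow> real \<Rightarrow> real"
  assumes "a \<noteq> 0" and "hr_solution a f"
  shows "hr_solution a (\<lambda>x t. f (x - s) t) \<and>
         hr_solution a (\<lambda>x t. f x (t - s)) \<and>
         hr_solution a (\<lambda>x t. f x t + s / a) \<and>
         hr_solution a (\<lambda>x t. exp s * f (x * exp s) (t * exp (- 3 * s))
                              + x / a * (1 - exp (2 * s)) + t * (1 - exp (- 2 * s)))"
proof -
  obtain ft fx fxt fxxt :: "real \<Rightarrow> real \<Rightarrow> real" where
    d1: "\<And>x t. ((\<lambda>t'. f x t') has_real_derivative ft x t) (at t)" and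
    d2: "\<And>x t. ((\<lambda>x'. f x' t) has_real_derivative fx x t) (at x)" and
    d3: "\<And>x t. ((\<lambda>x'. ft x' t) has_real_derivative fxt x t) (at x)" and
    d4: "\<And>x t. ((\<lambda>x'. fxt x' t) has_real_derivative fxxt x t) (at x)" and
    e: "\<And>x t. ft x t - fxxt x t + a * fx x t * (1 - ft x t) = 0"
    using assms(2) unfolding hr_solution_def by blast
  have A: "hr_solution a (\<lambda>x t. f (x - s) t)"
    unfolding hr_solution_def
    apply (rule exI[of _ "\<lambda>x t. ft (x - s) t"], rule exI[of _ "\<lambda>x t. fx (x - s) t"],
           rule exI[of _ "\<lambda>x t. fxt (x - s) t"], rule exI[of _ "\<lambda>x t. fxxt (x - s) t"])
    using d1 e by (auto intro!: shiftd d2 d3 d4)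
  have B: "hr_solution a (\<lambda>x t. f x (t - s))"
    unfolding hr_solution_def
    apply (rule exI[of _ "\<lambda>x t. ft x (t - s)"], rule exI[of _ "\<lambda>x t. fx x (t - s)"],
           rule exI[of _ "\<lambda>x t. fxt x (t - s)"], rule exI[of _ "\<lambda>x t. fxxt x (t - s)"])
    using d2 d3 d4 e by (auto intro!: shiftd d1)
  have C: "hr_solution a (\<lambda>x t. f x t + s / a)"
    unfolding hr_solution_def
    apply (rule exI[of _ ft], rule exI[of _ fx], rule exI[of _ fxt], rule exI[of _ fxxt])
    using d3 d4 e by (auto intro!: derivative_eq_intros d1 d2)
  define E where "E = exp s"
  have E0: "E > 0" unfolding E_def by simp
  have e3: "exp (- 3 * s) = inverse (E^3)" and e2: "exp (2*s) = E^2"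
    and em2: "exp (- 2 * s) = inverse (E^2)"
    unfolding E_def by (simp_all add: exp_minus[symmetric] exp_of_nat_mult[symmetric])
  let ?c = "exp (- 3 * s)"
  have D: "hr_solution a (\<lambda>x t. exp s * f (x * exp s) (t * exp (- 3 * s))
                              + x / a * (1 - exp (2 * s)) + t * (1 - exp (- 2 * s)))"
    unfolding hr_solution_def
    apply (rule exI[of _ "\<lambda>x t. exp s * (ft (x * exp s) (t * ?c) * ?c) + (1 - exp (- 2 * s))"],
           rule exI[of _ "\<lambda>x t. exp s * (fx (x * exp s) (t * ?c) * exp s) + 1 / a * (1 - exp (2 * s))"],
           rule exI[of _ "\<lambda>x t. exp s * (fxt (x * exp s) (t * ?c) * exp s)*?c"],
           rule exI[of _ "\<lambda>x t. exp s * (fxxt (x * exp s) (t * ?c) * exp s) * exp s * ?c"])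
  proof (intro conjI allI)
    fix x t
    show "((\<lambda>t'. exp s * f (x * exp s) (t' * ?c) + x / a * (1 - exp (2 * s)) + t' * (1 - exp (- 2 * s)))
      has_real_derivative exp s * (ft (x * exp s) (t * ?c) * ?c) + (1 - exp (- 2 * s))) (at t)"
      by (auto intro!: derivative_eq_intros scal d1)
    show "((\<lambda>x'. exp s * f (x' * exp s) (t * ?c) + x' / a * (1 - exp (2 * s)) + t * (1 - exp (- 2 * s)))
      has_real_derivative exp s * (fx (x * exp s) (t * ?c) * exp s) + 1 / a * (1 - exp (2 * s))) (at x)"
      using assms(1) by (auto intro!: derivative_eq_intros scal[of "\<lambda>x'. f x' _"] d2)
    show "((\<lambda>x'. exp s * (ft (x' * exp s) (t * ?c) * ?c) + (1 - exp (- 2 * s)))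
      has_real_derivative exp s * (fxt (x * exp s) (t * ?c) * exp s)*?c) (at x)"
      by (auto intro!: derivative_eq_intros scal[of "\<lambda>x'. ft x' _"] d3)
    show "((\<lambda>x'. exp s * (fxt (x' * exp s) (t * ?c) * exp s)*?c)
      has_real_derivative exp s * (fxxt (x * exp s) (t * ?c) * exp s) * exp s * ?c) (at x)"
      by (auto intro!: derivative_eq_intros scal[of "\<lambda>x'. fxt x' _"] d4)
    have ee: "ft (x*E) (t * ?c) - fxxt (x*E) (t * ?c) + a * fx (x*E) (t * ?c) * (1 - ft (x*E) (t * ?c)) = 0"
      by (rule e)
    show "exp s * (ft (x * exp s) (t * ?c) * ?c) + (1 - exp (- 2 * s)) -
         exp s * (fxxt (x * exp s) (t * ?c) * exp s) * exp s * ?c +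
         a * (exp s * (fx (x * exp s) (t * ?c) * exp s) + 1 / a * (1 - exp (2 * s))) *
         (1 - (exp s * (ft (x * exp s) (t * ?c) * ?c) + (1 - exp (- 2 * s)))) = 0"
      unfolding E_def[symmetric] e3 e2 em2
      by (rule alg[OF E0 assms(1) ee[unfolded e3]])
  qed
  show ?thesis using A B C D by blast
qed

end
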